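(* Let $q\in\mathbb C$ with $|q|=1$, $q^2\neq1$, and let $A,B$ be self-adjoint operators on a Hilbert space $\mathcal H$. Suppose $\mu,\mu q,\mu q^2\in\rho(B)$, $R_\mu(B)A\subseteq qAR_{\mu q}(B)$ and $R_{\mu q}(B)A\subseteq qAR_{\mu q^2}(B)$. Then $\mathcal D_{q^2}(A^2,B)$ is a core for $B$.
   Context: $\rho(T)$ denotes the resolvent set and $R_\lambda(T)=(T-\lambda I)^{-1}$ the resolvent of a closed operator $T$; $S\subseteq T$ means $T$ extends $S$; products of unbounded operators have their natural domains. For self-adjoint $X,Y$ and a complex number $p$, $\mathcal D_p(X,Y):=\{f\in\mathcal D(YX)\cap\mathcal D(XY): XYf=pYXf\}$; thus $\mathcal D_{q^2}(A^2,B)=\{f\in\mathcal D(BA^2)\cap\mathcal D(A^2B): A^2Bf=q^2BA^2f\}$. *)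

theory Defs
  imports "HOL-Analysis.Analysis"
begin

text \<open>Complex inner product spaces (complex Hilbert spaces are the instances that are
  also complete_space). The inner product is linear in the second argument.\<close>

class complex_inner = real_normed_vector +
  fixes scaleC :: "complex \<Rightarrow> 'a \<Rightarrow> 'a"
    and cinner :: "'a \<Rightarrow> 'a \<Rightarrow> complex"
  assumes scaleC_add_right: "scaleC a (x + y) = scaleC a x + scaleC a y"
    and scaleC_add_left: "scaleC (a + b) x = scaleC a x + scaleC b x"
    and scaleC_scaleC: "scaleC a (scaleC b x) = scaleC (a * b) x"
    and scaleC_one: "scaleC 1 x = x"
    and scaleR_scaleC: "scaleR r x = scaleC (complex_of_real r) x"
    and cinner_commute: "cinner x y = cnj (cinner y x)"
    and cinner_add_right: "cinner x (y + z) = cinner x y + cinner x z"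
    and cinner_scaleC_right: "cinner x (scaleC a y) = a * cinner x y"
    and cinner_eq_zero: "cinner x x = 0 \<longleftrightarrow> x = 0"
    and norm_cinner: "norm x = sqrt (Re (cinner x x))"

text \<open>(Possibly unbounded) operators are represented by their graphs.
  Thus S \<subseteq> T means that T extends S, Domain T is the domain of T.\<close>

type_synonym 'a op = "('a \<times> 'a) set"

text \<open>Product XY with its natural domain: first apply Y, then X.\<close>
definition op_comp :: "'a op \<Rightarrow> 'a op \<Rightarrow> 'a op" where
  "op_comp X Y = Y O X"

definition op_smult :: "complex \<Rightarrow> ('a::complex_inner) op \<Rightarrow> 'a op" where
  "op_smult c X = {(f, scaleC c g) | f g. (f, g) \<in> X}"

definition op_shift :: "('a::complex_inner) op \<Rightarrow> complex \<Rightarrow> 'a op" where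
  "op_shift T lam = {(f, g - scaleC lam f) | f g. (f, g) \<in> T}"

definition resolvent :: "('a::complex_inner) op \<Rightarrow> complex \<Rightarrow> 'a op" where
  "resolvent T lam = converse (op_shift T lam)"

definition resolvent_set :: "('a::complex_inner) op \<Rightarrow> complex set" where
  "resolvent_set T = {lam. Domain (resolvent T lam) = UNIV
      \<and> single_valued (resolvent T lam)
      \<and> (\<exists>K. \<forall>(f, g) \<in> resolvent T lam. norm g \<le> K * norm f)}"

definition adjoint :: "('a::complex_inner) op \<Rightarrow> 'a op" where
  "adjoint T = {(g, h). \<forall>(f, k) \<in> T. cinner k g = cinner f h}"

definition self_adjoint :: "('a::complex_inner) op \<Rightarrow> bool" where
  "self_adjoint T \<longleftrightarrow> closure (Domain T) = UNIV \<and> adjoint T = T"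

definition Dp :: "complex \<Rightarrow> ('a::complex_inner) op \<Rightarrow> 'a op \<Rightarrow> 'a set" where
  "Dp p X Y = {f. \<exists>g h. (f, g) \<in> op_comp X Y \<and> (f, h) \<in> op_comp Y X \<and> g = scaleC p h}"

definition is_core :: "'a set \<Rightarrow> ('a::complex_inner) op \<Rightarrow> bool" where
  "is_core D T \<longleftrightarrow> D \<subseteq> Domain T \<and> closure {(f, g) \<in> T. f \<in> D} = T"

end

theory Submission
  imports Defs
begin


lemma scaleC_of_real: "scaleC (complex_of_real r) x = r *\<^sub>R (x::'a::complex_inner)"
  by (simp add: scaleR_scaleC)

lemma scaleC_zero_left[simp]: "scaleC 0 (x::'a::complex_inner) = 0"
  using scaleC_of_real[of 0 x] by simp

lemma scaleC_zero_right[simp]: "scaleC a (0::'a::complex_inner) = 0"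
proof -
  have "scaleC a (0::'a) = scaleC a 0 + scaleC a 0" using scaleC_add_right[of a 0 0] by simp
  thus ?thesis by simp
qed

lemma scaleC_minus1: "scaleC (-1) (x::'a::complex_inner) = - x"
  using scaleC_of_real[of "-1" x] by simp

lemma scaleC_minus_right: "scaleC a (- x) = - scaleC a (x::'a::complex_inner)"
proof -
  have "scaleC a (- x) = scaleC a (scaleC (-1) x)" by (simp add: scaleC_minus1)
  also have "\<dots> = scaleC (-1) (scaleC a x)" by (simp add: scaleC_scaleC)
  finally show ?thesis by (simp add: scaleC_minus1)
qed

lemma scaleC_minus_left: "scaleC (- a) x = - scaleC a (x::'a::complex_inner)"
proof -
  have "scaleC (- a) x = scaleC (-1) (scaleC a x)" by (simp add: scaleC_scaleC)
  thus ?thesis by (simp add: scaleC_minus1)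
qed

lemma scaleC_diff_right: "scaleC a (x - y) = scaleC a x - scaleC a (y::'a::complex_inner)"
  by (simp only: diff_conv_add_uminus scaleC_add_right scaleC_minus_right)

lemma scaleC_diff_left: "scaleC (a - b) x = scaleC a x - scaleC b (x::'a::complex_inner)"
  by (simp only: diff_conv_add_uminus scaleC_add_left scaleC_minus_left)

lemma cinner_zero_right[simp]: "cinner x (0::'a::complex_inner) = 0"
proof -
  have "cinner x (0::'a) = cinner x 0 + cinner x 0" using cinner_add_right[of x 0 0] by simp
  thus ?thesis by simp
qed

lemma cinner_zero_left[simp]: "cinner (0::'a::complex_inner) x = 0"
  by (subst cinner_commute) simp

lemma cinner_add_left: "cinner (x + y) z = cinner x z + cinner y (z::'a::complex_inner)"
  by (subst (1 2 3) cinner_commute) (simp add: cinner_add_right)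

lemma cinner_scaleC_left: "cinner (scaleC a x) y = cnj a * cinner x (y::'a::complex_inner)"
  by (subst (1 2) cinner_commute) (simp add: cinner_scaleC_right)

lemma cinner_minus_right: "cinner x (- y) = - cinner x (y::'a::complex_inner)"
  using cinner_scaleC_right[of x "-1" y] by (simp add: scaleC_minus1)

lemma cinner_minus_left: "cinner (- x) y = - cinner x (y::'a::complex_inner)"
  by (subst (1 2) cinner_commute) (simp add: cinner_minus_right)

lemma cinner_diff_right: "cinner x (y - z) = cinner x y - cinner x (z::'a::complex_inner)"
  by (simp only: diff_conv_add_uminus cinner_add_right cinner_minus_right)

lemma cinner_diff_left: "cinner (x - y) z = cinner x z - cinner y (z::'a::complex_inner)"
  by (simp only: diff_conv_add_uminus cinner_add_left cinner_minus_left)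

lemma cinner_scaleR_right: "cinner x (r *\<^sub>R y) = complex_of_real r * cinner x (y::'a::complex_inner)"
  by (simp add: scaleR_scaleC cinner_scaleC_right)

lemma cinner_scaleR_left: "cinner (r *\<^sub>R x) y = complex_of_real r * cinner x (y::'a::complex_inner)"
  by (simp add: scaleR_scaleC cinner_scaleC_left)

lemma cinner_self_Im: "Im (cinner x (x::'a::complex_inner)) = 0"
  using arg_cong[OF cinner_commute[of x x], of Im] by simp

lemma cinner_self_Re: "norm x ^ 2 = Re (cinner x (x::'a::complex_inner))"
proof -
  have "Re (cinner x x) \<ge> 0"
  proof (rule ccontr)
    assume "\<not> ?thesis"
    hence "sqrt (Re (cinner x x)) < 0" by simp
    thus False using norm_cinner[of x] norm_ge_zero[of x] by simp
  qed
  thus ?thesis using norm_cinner[of x] by simp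
qed

lemma cinner_self: "cinner x (x::'a::complex_inner) = complex_of_real (norm x ^ 2)"
  using cinner_self_Re[of x] cinner_self_Im[of x] by (simp add: complex_eq_iff)

lemma Re_cinner_sym: "Re (cinner y x) = Re (cinner x (y::'a::complex_inner))"
  by (subst cinner_commute) simp

lemma norm_add_sq: "norm (x + y) ^ 2 = norm x ^ 2 + norm y ^ 2 + 2 * Re (cinner x (y::'a::complex_inner))"
  by (simp add: cinner_self_Re cinner_add_left cinner_add_right Re_cinner_sym[of y x])

lemma norm_diff_sq: "norm (x - y) ^ 2 = norm x ^ 2 + norm y ^ 2 - 2 * Re (cinner x (y::'a::complex_inner))"
  by (simp add: cinner_self_Re cinner_diff_left cinner_diff_right Re_cinner_sym[of y x])

lemma norm_scaleC: "norm (scaleC a x) = cmod a * norm (x::'a::complex_inner)"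
proof -
  have "norm (scaleC a x) ^ 2 = Re (cnj a * a * cinner x x)"
    by (simp only: cinner_self_Re cinner_scaleC_left cinner_scaleC_right mult.assoc)
       (simp only: mult.left_commute)
  also have "\<dots> = (cmod a * norm x) ^ 2"
  proof -
    have e: "cnj a * a = complex_of_real (cmod a ^ 2)" by (metis complex_norm_square mult.commute)
    have "cnj a * a * cinner x x = complex_of_real (cmod a ^ 2 * norm x ^ 2)"
      unfolding e cinner_self by simp
    thus ?thesis by (simp add: power_mult_distrib)
  qed
  finally show ?thesis
    by (rule power2_eq_imp_eq) simp_all
qed



lemma norm_scaleR_sq: "norm (t *\<^sub>R y) ^ 2 = t^2 * norm (y::'a::complex_inner) ^ 2"
  by (simp add: power_mult_distrib power2_abs)

lemma re_cs: "\<bar>Re (cinner x y)\<bar> \<le> norm x * norm (y::'a::complex_inner)"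
proof (cases "y = 0")
  case True thus ?thesis by simp
next
  case False
  define Y where "Y = norm y ^ 2"
  define r where "r = Re (cinner x y)"
  have Y: "Y > 0" using False by (simp add: Y_def)
  define t where "t = - r / Y"
  have "0 \<le> norm (x + t *\<^sub>R y) ^ 2" by simp
  also have "\<dots> = norm x ^ 2 + t^2 * Y + 2 * t * r"
    by (simp add: norm_add_sq power_mult_distrib power2_abs cinner_scaleR_right Y_def r_def)
  also have "\<dots> = norm x ^ 2 - r^2 / Y"
    using Y by (simp add: t_def field_simps power2_eq_square)
  finally have "r^2 \<le> norm x ^ 2 * Y" using Y by (simp add: field_simps)
  hence "\<bar>r\<bar>^2 \<le> (norm x * norm y)^2" by (simp add: Y_def power_mult_distrib)
  thus ?thesis unfolding r_def by (rule power2_le_imp_le) simp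
qed

lemma cs: "cmod (cinner x y) \<le> norm x * norm (y::'a::complex_inner)"
proof (cases "cinner x y = 0")
  case True thus ?thesis by simp
next
  case False
  define c where "c = cinner x y"
  define w where "w = complex_of_real (1 / cmod c) * cnj c"
  have cw: "cmod w = 1" using False by (simp add: w_def c_def norm_mult norm_divide)
  have "cinner x (scaleC w y) = w * c" by (simp add: cinner_scaleC_right c_def)
  also have "w * c = complex_of_real (cmod c)"
  proof -
    have "cnj c * c = complex_of_real (cmod c ^ 2)" using complex_norm_square[of c] by (simp add: ac_simps)
    hence "w * c = complex_of_real (1/cmod c * cmod c ^2)" by (simp add: w_def mult.assoc)
    also have "\<dots> = complex_of_real (cmod c)" using False by (simp add: power2_eq_square c_def)
    finally show ?thesis .
  qed
  finally have "cmod c = Re (cinner x (scaleC w y))" by simp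
  also have "\<dots> \<le> norm x * norm (scaleC w y)" using re_cs[of x "scaleC w y"] by simp
  also have "\<dots> = norm x * norm y" by (simp add: norm_scaleC cw)
  finally show ?thesis unfolding c_def .
qed

lemma bounded_linear_cinner_right: "bounded_linear (\<lambda>y. cinner (x::'a::complex_inner) y)"
proof (rule bounded_linear_intro[where K = "norm x"])
  fix y z show "cinner x (y + z) = cinner x y + cinner x z" by (rule cinner_add_right)
  fix r show "cinner x (r *\<^sub>R y) = r *\<^sub>R cinner x y"
    by (simp add: cinner_scaleR_right scaleR_conv_of_real)
  show "norm (cinner x y) \<le> norm y * norm x" using cs[of x y] by (simp add: mult.commute)
qed

lemma adjoint_closed: "closed (adjoint (T::('a::complex_inner) op))"
proof -
  have eq: "adjoint T = (\<Inter>p\<in>T. {q. cinner (snd p) (fst q) = cinner (fst p) (snd q)})"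
  proof (rule set_eqI)
    fix q :: "'a \<times> 'a"
    show "q \<in> adjoint T \<longleftrightarrow> q \<in> (\<Inter>p\<in>T. {q. cinner (snd p) (fst q) = cinner (fst p) (snd q)})"
      by (cases q) (simp add: adjoint_def case_prod_beta)
  qed
  show ?thesis unfolding eq
  proof (rule closed_INT, intro ballI closed_Collect_eq)
    fix p :: "'a \<times> 'a"
    show "continuous_on UNIV (\<lambda>q::'a\<times>'a. cinner (snd p) (fst q))"
      by (rule linear_continuous_on, rule bounded_linear_compose[OF bounded_linear_cinner_right bounded_linear_fst])
    show "continuous_on UNIV (\<lambda>q::'a\<times>'a. cinner (fst p) (snd q))"
      by (rule linear_continuous_on, rule bounded_linear_compose[OF bounded_linear_cinner_right bounded_linear_snd])
  qed
qed

lemma adjoint_iff: "(g,h) \<in> adjoint T \<longleftrightarrow> (\<forall>f k. (f,k) \<in> T \<longrightarrow> cinner k g = cinner f h)"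
  unfolding adjoint_def by (simp add: Ball_def split_paired_All)

lemma adjoint_add: "(g1,h1) \<in> adjoint T \<Longrightarrow> (g2,h2) \<in> adjoint T \<Longrightarrow> (g1+g2, h1+h2) \<in> adjoint (T::('a::complex_inner) op)"
  unfolding adjoint_iff by (simp add: cinner_add_right)

lemma adjoint_scaleC: "(g,h) \<in> adjoint T \<Longrightarrow> (scaleC c g, scaleC c h) \<in> adjoint (T::('a::complex_inner) op)"
  unfolding adjoint_iff by (simp add: cinner_scaleC_right)

lemma adjoint_diff: "(g1,h1) \<in> adjoint T \<Longrightarrow> (g2,h2) \<in> adjoint T \<Longrightarrow> (g1-g2, h1-h2) \<in> adjoint (T::('a::complex_inner) op)"
  unfolding adjoint_iff by (simp add: cinner_diff_right)

lemma adjoint_zero: "(0,0) \<in> adjoint (T::('a::complex_inner) op)"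
  unfolding adjoint_iff by simp

lemma sa_add: "self_adjoint T \<Longrightarrow> (g1,h1) \<in> T \<Longrightarrow> (g2,h2) \<in> T \<Longrightarrow> (g1+g2, h1+h2) \<in> (T::('a::complex_inner) op)"
  unfolding self_adjoint_def by (metis adjoint_add)
lemma sa_diff: "self_adjoint T \<Longrightarrow> (g1,h1) \<in> T \<Longrightarrow> (g2,h2) \<in> T \<Longrightarrow> (g1-g2, h1-h2) \<in> (T::('a::complex_inner) op)"
  unfolding self_adjoint_def by (metis adjoint_diff)
lemma sa_scaleC: "self_adjoint T \<Longrightarrow> (g,h) \<in> T \<Longrightarrow> (scaleC c g, scaleC c h) \<in> (T::('a::complex_inner) op)"
  unfolding self_adjoint_def by (metis adjoint_scaleC)
lemma sa_closed: "self_adjoint T \<Longrightarrow> closed (T::('a::complex_inner) op)"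
  unfolding self_adjoint_def by (metis adjoint_closed)
lemma sa_sym: "self_adjoint T \<Longrightarrow> (f,g) \<in> T \<Longrightarrow> (f',g') \<in> T \<Longrightarrow> cinner g f' = cinner f (g'::'a::complex_inner)"
proof -
  assume sa: "self_adjoint T" and fg: "(f,g) \<in> T" and fg': "(f',g') \<in> T"
  have "(f',g') \<in> adjoint T" using sa fg' by (simp add: self_adjoint_def)
  thus ?thesis using fg by (simp add: adjoint_iff)
qed

lemma sa_norm: assumes "self_adjoint A" "(f,g) \<in> A"
  shows "norm (g + scaleC \<i> f) ^ 2 = norm g ^ 2 + norm (f::'a::complex_inner) ^ 2"
proof -
  have "cinner g f = cinner f g" using sa_sym[OF assms(1,2,2)] .
  hence "cinner g f = cnj (cinner g f)" using cinner_commute[of f g] by simp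
  hence "Im (cinner g f) = Im (cnj (cinner g f))" by (rule arg_cong)
  hence "Im (cinner g f) = 0" by simp
  hence "Re (cinner g (scaleC \<i> f)) = 0" by (simp add: cinner_scaleC_right)
  thus ?thesis by (simp add: norm_add_sq norm_scaleC)
qed



lemma parallelogram: "norm (a + b) ^ 2 + norm (a - b) ^ 2 = 2 * norm a ^ 2 + 2 * norm (b::'a::complex_inner) ^ 2"
  by (simp add: norm_add_sq norm_diff_sq)

lemma proj:
  fixes M :: "'a::{complex_inner,complete_space} set"
  assumes cl: "closed M" and ne: "m0 \<in> M"
    and add: "\<And>a b. a \<in> M \<Longrightarrow> b \<in> M \<Longrightarrow> a + b \<in> M"
    and sc: "\<And>a r. a \<in> M \<Longrightarrow> r *\<^sub>R a \<in> M"
  shows "\<exists>m\<in>M. \<forall>y\<in>M. Re (cinner (x - m) y) = 0"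
proof -
  define N where "N = (\<lambda>m. norm (x - m)) ` M"
  define d where "d = Inf N"
  have Nne: "N \<noteq> {}" using ne by (auto simp: N_def)
  have bdd: "bdd_below N" by (auto simp: N_def intro: bdd_belowI[of _ 0])
  have dle: "\<And>m. m \<in> M \<Longrightarrow> d \<le> norm (x - m)"
    unfolding d_def N_def by (rule cInf_lower) (auto simp: bdd[unfolded N_def])
  have d0: "0 \<le> d"
    unfolding d_def by (rule cInf_greatest[OF Nne]) (auto simp: N_def)
  have "\<forall>n. \<exists>m. m \<in> M \<and> norm (x - m) < d + inverse (real (Suc n))"
  proof
    fix n
    have "Inf N < d + inverse (real (Suc n))" by (simp add: d_def)
    from cInf_lessD[OF Nne this] show "\<exists>m. m \<in> M \<and> norm (x - m) < d + inverse (real (Suc n))"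
      by (auto simp: N_def)
  qed
  then obtain s where sM: "\<And>n. s n \<in> M" and sd: "\<And>n. norm (x - s n) < d + inverse (real (Suc n))"
    by metis
  define e where "e = (\<lambda>n::nat. inverse (real (Suc n)))"
  have e0: "\<And>n. 0 < e n" and e1: "\<And>n. e n \<le> 1" by (auto simp: e_def field_simps)
  have sq: "\<And>n. norm (x - s n) ^ 2 \<le> d^2 + (2*d+1) * e n"
  proof -
    fix n
    have "norm (x - s n) ^ 2 \<le> (d + e n) ^ 2"
      using sd[of n] dle[OF sM[of n]] d0 by (intro power_mono) (auto simp: e_def)
    also have "\<dots> = d^2 + 2*d*e n + e n * e n" by (simp add: power2_eq_square algebra_simps)
    also have "e n * e n \<le> e n" using e0[of n] e1[of n] by (simp add: mult_le_cancel_left1)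
    hence "d^2 + 2*d*e n + e n * e n \<le> d^2 + (2*d+1) * e n" by (simp add: algebra_simps)
    finally show "norm (x - s n) ^ 2 \<le> d^2 + (2*d+1) * e n" .
  qed
  have est: "\<And>n k. norm (s n - s k) ^ 2 \<le> (4*d+2) * (e n + e k)"
  proof -
    fix n k
    define a where "a = x - s n"
    define b where "b = x - s k"
    have mid: "(1/2) *\<^sub>R (s n + s k) \<in> M" using sM add sc by blast
    have "a + b = 2 *\<^sub>R (x - (1/2) *\<^sub>R (s n + s k))"
      by (simp add: a_def b_def algebra_simps scaleR_2)
    hence "norm (a + b) = 2 * norm (x - (1/2) *\<^sub>R (s n + s k))" by simp
    hence "2 * d \<le> norm (a + b)" using dle[OF mid] by simp
    hence ab: "4 * d^2 \<le> norm (a + b) ^ 2"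
      using d0 power_mono[of "2*d" "norm (a+b)" 2] by (simp add: power_mult_distrib)
    have "a - b = s k - s n" by (simp add: a_def b_def)
    hence "norm (s n - s k) = norm (a - b)" by (simp add: norm_minus_commute)
    hence "norm (s n - s k) ^ 2 = 2 * norm a ^ 2 + 2 * norm b ^ 2 - norm (a + b) ^ 2"
      using parallelogram[of a b] by simp
    thus "norm (s n - s k) ^ 2 \<le> (4*d+2) * (e n + e k)"
      using sq[of n] sq[of k] ab unfolding a_def b_def by (simp add: algebra_simps)
  qed
  have "Cauchy s"
  proof (rule metric_CauchyI)
    fix eps :: real assume eps: "0 < eps"
    obtain K where K: "2 * (4*d+2) / eps^2 < real K" using reals_Archimedean2 by blast
    have "\<forall>n\<ge>K. \<forall>k\<ge>K. dist (s n) (s k) < eps"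
    proof (intro allI impI)
      fix n k assume nK: "n \<ge> K" and kK: "k \<ge> K"
      have en: "e n \<le> e K" "e k \<le> e K" using nK kK by (auto simp: e_def field_simps)
      have "e K * (2 * (4*d+2)) < e K * (real K * eps^2)"
      proof -
        have "2 * (4*d+2) < real K * eps^2" using K eps by (simp add: field_simps)
        thus ?thesis using e0[of K] by simp
      qed
      also have "e K * (real K * eps^2) \<le> eps^2"
        using eps by (simp add: e_def field_simps)
      finally have eK: "(4*d+2) * (2 * e K) < eps^2" by (simp add: algebra_simps)
      have "(4*d+2) * (e n + e k) \<le> (4*d+2) * (2 * e K)"
        using en d0 by (intro mult_left_mono) auto
      hence "norm (s n - s k) ^ 2 < eps^2" using est[of n k] eK by simp
      hence "norm (s n - s k) < eps" using eps by (simp add: power_less_imp_less_base)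
      thus "dist (s n) (s k) < eps" by (simp add: dist_norm)
    qed
    thus "\<exists>K. \<forall>n\<ge>K. \<forall>k\<ge>K. dist (s n) (s k) < eps" by blast
  qed
  then obtain m where lim: "s \<longlonglongrightarrow> m" using Cauchy_convergent convergent_def by blast
  have mM: "m \<in> M" using cl lim sM closed_sequentially by blast
  have l1: "(\<lambda>n. norm (x - s n)) \<longlonglongrightarrow> norm (x - m)"
    by (intro tendsto_intros lim)
  have "norm (x - m) \<le> d"
    by (rule LIMSEQ_le[OF l1 LIMSEQ_inverse_real_of_nat_add[of d]]) (intro exI[of _ 0] allI impI less_imp_le sd)
  hence nd: "norm (x - m) = d" using dle[OF mM] by simp
  show ?thesis
  proof (intro bexI[OF _ mM] ballI)
    fix y assume yM: "y \<in> M"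
    define z where "z = x - m"
    define r where "r = Re (cinner z y)"
    define Y where "Y = norm y ^ 2"
    have Y0: "0 \<le> Y" by (simp add: Y_def)
    have key: "\<And>t. 2 * t * r \<le> t^2 * Y"
    proof -
      fix t :: real
      have "m + t *\<^sub>R y \<in> M" using mM yM add sc by blast
      hence "norm z \<le> norm (z - t *\<^sub>R y)" using dle nd by (simp add: z_def algebra_simps)
      hence "norm z ^ 2 \<le> norm (z - t *\<^sub>R y) ^ 2" by (simp add: power_mono)
      also have "\<dots> = norm z ^ 2 + t^2 * Y - 2 * t * r"
        by (simp add: norm_diff_sq power_mult_distrib power2_abs cinner_scaleR_right Y_def r_def)
      finally show "2 * t * r \<le> t^2 * Y" by simp
    qed
    define t where "t = r / (Y+1)"
    have P: "(Y+1)^2 * (2 * t * r) \<le> (Y+1)^2 * (t^2 * Y)" by (rule mult_left_mono[OF key]) simp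
    have E1: "(Y+1)^2 * (2 * t * r) = 2 * r^2 * (Y+1)" using Y0
      by (simp add: t_def field_simps power2_eq_square)
    have tt: "(Y+1)^2 * t^2 = r^2" using Y0 by (simp add: t_def power_divide)
    have E2: "(Y+1)^2 * (t^2 * Y) = r^2 * Y"
      by (simp only: mult.assoc[symmetric] tt)
    have "2 * r^2 * (Y+1) \<le> r^2 * Y" using P unfolding E1 E2 .
    moreover have "0 \<le> r^2 * Y" using Y0 by simp
    moreover have "2 * r^2 * (Y+1) = 2*(r^2*Y) + 2*r^2" by (simp add: algebra_simps)
    ultimately have "r^2 \<le> 0" by linarith
    thus "Re (cinner (x - m) y) = 0" by (simp add: r_def z_def)
  qed
qed



lemma sa_norm_le:
  assumes "self_adjoint A" "(f,g) \<in> A"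
  shows "norm f \<le> norm (g + scaleC \<i> f)" "norm g \<le> norm (g + scaleC \<i> (f::'a::complex_inner))"
proof -
  have e: "norm (g + scaleC \<i> f) ^ 2 = norm g ^ 2 + norm f ^ 2" by (rule sa_norm[OF assms])
  show "norm f \<le> norm (g + scaleC \<i> f)" by (rule power2_le_imp_le) (simp_all add: e)
  show "norm g \<le> norm (g + scaleC \<i> f)" by (rule power2_le_imp_le) (simp_all add: e)
qed

lemma cauchy_dom:
  assumes "Cauchy Y" "\<And>n k. dist (X n) (X k) \<le> dist (Y n) (Y k)"
  shows "Cauchy (X :: nat \<Rightarrow> 'b::metric_space)"
proof (rule metric_CauchyI)
  fix e :: real assume "0 < e"
  with assms(1) obtain M where "\<forall>m\<ge>M. \<forall>n\<ge>M. dist (Y m) (Y n) < e" by (meson metric_CauchyD)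
  thus "\<exists>M. \<forall>m\<ge>M. \<forall>n\<ge>M. dist (X m) (X n) < e" using assms(2) by (meson order_le_less_trans)
qed

lemma bounded_linear_scaleC: "bounded_linear (\<lambda>x::'a::complex_inner. scaleC c x)"
proof (rule bounded_linear_intro[where K = "cmod c"])
  fix x y :: 'a show "scaleC c (x + y) = scaleC c x + scaleC c y" by (rule scaleC_add_right)
  fix r :: real show "scaleC c (r *\<^sub>R x) = r *\<^sub>R scaleC c x"
    by (simp add: scaleR_scaleC scaleC_scaleC mult.commute)
  show "norm (scaleC c x) \<le> norm x * cmod c" by (simp add: norm_scaleC mult.commute)
qed

lemma sa_zero: "self_adjoint A \<Longrightarrow> (0,0) \<in> (A::('a::complex_inner) op)"
  unfolding self_adjoint_def using adjoint_zero by metis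

lemma sa_surj:
  fixes A :: "('a::{complex_inner,complete_space}) op"
  assumes sa: "self_adjoint A"
  shows "\<exists>f g. (f,g) \<in> A \<and> g + scaleC \<i> f = w"
proof -
  define M where "M = {g + scaleC \<i> f | f g. (f,g) \<in> A}"
  have inM: "\<And>f g. (f,g) \<in> A \<Longrightarrow> g + scaleC \<i> f \<in> M" by (auto simp: M_def)
  have M0: "0 \<in> M" using inM[OF sa_zero[OF sa]] by simp
  have Madd: "\<And>a b. a \<in> M \<Longrightarrow> b \<in> M \<Longrightarrow> a + b \<in> M"
  proof -
    fix a b assume "a \<in> M" "b \<in> M"
    then obtain f1 g1 f2 g2 where "(f1,g1) \<in> A" "(f2,g2) \<in> A" "a = g1 + scaleC \<i> f1" "b = g2 + scaleC \<i> f2"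
      by (auto simp: M_def)
    moreover have "(f1+f2, g1+g2) \<in> A" using sa_add[OF sa] calculation by blast
    ultimately show "a + b \<in> M" using inM[of "f1+f2" "g1+g2"] by (simp add: scaleC_add_right algebra_simps)
  qed
  have Msc: "\<And>a c. a \<in> M \<Longrightarrow> scaleC c a \<in> M"
  proof -
    fix a c assume "a \<in> M"
    then obtain f g where fg: "(f,g) \<in> A" "a = g + scaleC \<i> f" by (auto simp: M_def)
    have "(scaleC c f, scaleC c g) \<in> A" using sa_scaleC[OF sa fg(1)] .
    moreover have "scaleC c g + scaleC \<i> (scaleC c f) = scaleC c a"
      by (simp add: fg(2) scaleC_add_right scaleC_scaleC mult.commute)
    ultimately show "scaleC c a \<in> M" using inM by metis
  qed
  have Mr: "\<And>a r. a \<in> M \<Longrightarrow> r *\<^sub>R a \<in> M" using Msc by (simp add: scaleR_scaleC)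
  have Mcl: "closed M"
    unfolding closed_sequential_limits
  proof (intro allI impI, elim conjE)
    fix y l assume yM: "\<forall>n. y n \<in> M" and yl: "y \<longlonglongrightarrow> l"
    have "\<forall>n. \<exists>f g. (f,g) \<in> A \<and> y n = g + scaleC \<i> f" using yM by (simp add: M_def) blast
    then obtain F G where FG: "\<And>n. (F n, G n) \<in> A" and yFG: "\<And>n. y n = G n + scaleC \<i> (F n)"
      by metis
    have cy: "Cauchy y" using yl by (rule LIMSEQ_imp_Cauchy)
    have dd: "\<And>n k. dist (F n) (F k) \<le> dist (y n) (y k) \<and> dist (G n) (G k) \<le> dist (y n) (y k)"
    proof -
      fix n k
      have D: "(F n - F k, G n - G k) \<in> A" using sa_diff[OF sa FG FG] .
      have "y n - y k = (G n - G k) + scaleC \<i> (F n - F k)"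
        by (simp add: yFG scaleC_diff_right algebra_simps)
      thus "dist (F n) (F k) \<le> dist (y n) (y k) \<and> dist (G n) (G k) \<le> dist (y n) (y k)"
        using sa_norm_le[OF sa D] by (simp add: dist_norm)
    qed
    have "Cauchy F" using cauchy_dom[OF cy] dd by blast
    then obtain F0 where F0: "F \<longlonglongrightarrow> F0" using Cauchy_convergent convergent_def by blast
    have "Cauchy G" using cauchy_dom[OF cy] dd by blast
    then obtain G0 where G0: "G \<longlonglongrightarrow> G0" using Cauchy_convergent convergent_def by blast
    have "(\<lambda>n. (F n, G n)) \<longlonglongrightarrow> (F0, G0)" using F0 G0 by (rule tendsto_Pair)
    hence inA: "(F0, G0) \<in> A"
      by (rule closed_sequentially[OF sa_closed[OF sa], of "\<lambda>n. (F n, G n)", rotated]) (simp add: FG)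
    have "(\<lambda>n. G n + scaleC \<i> (F n)) \<longlonglongrightarrow> G0 + scaleC \<i> F0"
      by (intro tendsto_add G0 bounded_linear.tendsto[OF bounded_linear_scaleC] F0)
    moreover have "y = (\<lambda>n. G n + scaleC \<i> (F n))" by (rule ext) (rule yFG)
    ultimately have "y \<longlonglongrightarrow> G0 + scaleC \<i> F0" by simp
    hence "l = G0 + scaleC \<i> F0" using yl LIMSEQ_unique by blast
    thus "l \<in> M" using inM[OF inA] by simp
  qed
  obtain m where mM: "m \<in> M" and orth: "\<forall>y\<in>M. Re (cinner (w - m) y) = 0"
    using proj[OF Mcl M0 Madd Mr] by blast
  define z where "z = w - m"
  have "(z, scaleC \<i> z) \<in> adjoint A"
    unfolding adjoint_iff
  proof (intro allI impI)
    fix f k assume fk: "(f,k) \<in> A"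
    define u where "u = k + scaleC \<i> f"
    have uM: "u \<in> M" using inM[OF fk] by (simp add: u_def)
    have r1: "Re (cinner z u) = 0" using orth uM by (simp add: z_def)
    have r2: "Re (cinner z (scaleC \<i> u)) = 0" using orth Msc[OF uM] by (simp add: z_def)
    hence "Im (cinner z u) = 0" by (simp add: cinner_scaleC_right)
    hence zu: "cinner z u = 0" using r1 by (simp add: complex_eq_iff)
    hence "cinner z k = - (\<i> * cinner z f)" by (simp add: u_def cinner_add_right cinner_scaleC_right add_eq_0_iff)
    hence "cinner k z = cnj (- (\<i> * cinner z f))" by (metis cinner_commute)
    also have "\<dots> = \<i> * cinner f z" using cinner_commute[of f z] by simp
    also have "\<dots> = cinner f (scaleC \<i> z)" by (simp add: cinner_scaleC_right)
    finally show "cinner k z = cinner f (scaleC \<i> z)" .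
  qed
  hence zA: "(z, scaleC \<i> z) \<in> A" using sa by (simp add: self_adjoint_def)
  have "cinner (scaleC \<i> z) z = cinner z (scaleC \<i> z)" by (rule sa_sym[OF sa zA zA])
  hence "- \<i> * cinner z z = \<i> * cinner z z" by (simp add: cinner_scaleC_left cinner_scaleC_right)
  hence "cinner z z = 0" by simp
  hence "z = 0" by (simp add: cinner_eq_zero)
  hence "w \<in> M" using mM by (simp add: z_def)
  thus ?thesis by (auto simp: M_def)
qed

lemma sa_dense2:
  fixes A :: "('a::{complex_inner,complete_space}) op"
  assumes sa: "self_adjoint A" and e: "0 < e"
  shows "\<exists>z. z \<in> Domain (A O A) \<and> dist z y < e"
proof -
  have cl: "closure (Domain A) = UNIV" using sa by (simp add: self_adjoint_def)
  have "y \<in> closure (Domain A)" using cl by simp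
  then obtain y' where y'D: "y' \<in> Domain A" and y'y: "dist y' y < e/2"
    using e by (meson closure_approachable half_gt_zero)
  obtain a where ya: "(y', a) \<in> A" using y'D by blast
  define w where "w = a + scaleC \<i> y'"
  have "w \<in> closure (Domain A)" using cl by simp
  then obtain w' where w'D: "w' \<in> Domain A" and w'w: "dist w' w < e/2"
    using e by (meson closure_approachable half_gt_zero)
  obtain c where w'c: "(w', c) \<in> A" using w'D by blast
  obtain z b where zb: "(z,b) \<in> A" and bw: "b + scaleC \<i> z = w'" using sa_surj[OF sa] by blast
  have "(w' - scaleC \<i> z, c - scaleC \<i> b) \<in> A" using sa_diff[OF sa w'c sa_scaleC[OF sa zb]] .
  moreover have "w' - scaleC \<i> z = b" using bw by (simp add: algebra_simps)
  ultimately have "(b, c - scaleC \<i> b) \<in> A" by simp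
  hence zD: "z \<in> Domain (A O A)" using zb by blast
  have D: "(z - y', b - a) \<in> A" using sa_diff[OF sa zb ya] .
  have "(b - a) + scaleC \<i> (z - y') = w' - w"
    using bw by (simp add: w_def scaleC_diff_right algebra_simps)
  hence "dist z y' \<le> dist w' w" using sa_norm_le(1)[OF sa D] by (simp add: dist_norm)
  hence "dist z y < e" using dist_triangle[of z y y'] y'y w'w by linarith
  thus ?thesis using zD by blast
qed



lemma resolvent_mem: "(f, x) \<in> resolvent B lam \<longleftrightarrow> (\<exists>g. (x, g) \<in> B \<and> f = g - scaleC lam x)"
  unfolding resolvent_def op_shift_def by auto

lemma rs_ex: "lam \<in> resolvent_set B \<Longrightarrow> \<exists>x. (f, x) \<in> resolvent B lam"
  unfolding resolvent_set_def by auto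

lemma rs_sv: "lam \<in> resolvent_set B \<Longrightarrow> (f, x) \<in> resolvent B lam \<Longrightarrow> (f, x') \<in> resolvent B lam \<Longrightarrow> x = x'"
  unfolding resolvent_set_def single_valued_def by blast

lemma cnj_q: "cmod q = 1 \<Longrightarrow> cnj q * q = 1"
  using complex_norm_square[of q] by (simp add: mult.commute)

lemma keyD:
  fixes q mu :: complex
    and A B :: "('a::{complex_inner, complete_space}) op"
  assumes q1: "cmod q = 1"
    and saA: "self_adjoint A" and saB: "self_adjoint B"
    and r1: "mu \<in> resolvent_set B" and r2: "mu * q \<in> resolvent_set B"
    and r3: "mu * q ^ 2 \<in> resolvent_set B"
    and h1: "op_comp (resolvent B mu) A \<subseteq> op_smult q (op_comp A (resolvent B (mu * q)))"
    and h2: "op_comp (resolvent B (mu * q)) A \<subseteq> op_smult q (op_comp A (resolvent B (mu * q ^ 2)))"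
    and fD: "f \<in> Domain (A O A)" and fx: "(f, x) \<in> resolvent B (mu * q ^ 2)"
  shows "x \<in> Dp (q ^ 2) (op_comp A A) B"
proof -
  define lam where "lam = mu * q ^ 2"
  define p where "p = cnj q ^ 2"
  have cq: "cnj q * q = 1" using cnj_q[OF q1] .
  have qp: "q ^ 2 * p = 1" using cq by (simp add: p_def power2_eq_square algebra_simps)
  obtain f1 f2 where ff1: "(f, f1) \<in> A" and f1f2: "(f1, f2) \<in> A" using fD by blast
  obtain c where f1c: "(f1, c) \<in> resolvent B (mu * q)" using rs_ex[OF r2] by blast
  have "(f, c) \<in> op_comp (resolvent B (mu * q)) A" unfolding op_comp_def using ff1 f1c by blast
  with h2 have "(f, c) \<in> op_smult q (op_comp A (resolvent B (mu * q ^ 2)))" by blast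
  then obtain b g' where fb: "(f, b) \<in> resolvent B (mu * q ^ 2)" and bg': "(b, g') \<in> A" and cg': "c = scaleC q g'"
    unfolding op_smult_def op_comp_def by blast
  have "b = x" using rs_sv[OF r3 fb fx] .
  hence xg': "(x, g') \<in> A" using bg' by simp
  obtain d where f2d: "(f2, d) \<in> resolvent B mu" using rs_ex[OF r1] by blast
  have "(f1, d) \<in> op_comp (resolvent B mu) A" unfolding op_comp_def using f1f2 f2d by blast
  with h1 have "(f1, d) \<in> op_smult q (op_comp A (resolvent B (mu * q)))" by blast
  then obtain b' d' where f1b': "(f1, b') \<in> resolvent B (mu * q)" and b'd': "(b', d') \<in> A" and dd': "d = scaleC q d'"
    unfolding op_smult_def op_comp_def by blast
  have "b' = c" using rs_sv[OF r2 f1b' f1c] .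
  hence cd': "(c, d') \<in> A" using b'd' by simp
  have g'c: "g' = scaleC (cnj q) c" using cq by (simp add: cg' scaleC_scaleC scaleC_one)
  have d'd: "d' = scaleC (cnj q) d" using cq by (simp add: dd' scaleC_scaleC scaleC_one)
  define v where "v = scaleC p d"
  have g'v: "(g', v) \<in> A"
  proof -
    have "(scaleC (cnj q) c, scaleC (cnj q) d') \<in> A" by (rule sa_scaleC[OF saA cd'])
    moreover have "scaleC (cnj q) d' = v" by (simp add: d'd v_def p_def scaleC_scaleC power2_eq_square)
    ultimately show ?thesis using g'c by simp
  qed
  obtain gx where xgx: "(x, gx) \<in> B" and fgx: "f = gx - scaleC lam x"
    using fx resolvent_mem unfolding lam_def by blast
  have gx: "gx = f + scaleC lam x" using fgx by simp
  have A1: "(gx, f1 + scaleC lam g') \<in> A"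
    unfolding gx by (rule sa_add[OF saA ff1 sa_scaleC[OF saA xg']])
  have A2: "(f1 + scaleC lam g', f2 + scaleC lam v) \<in> A"
    by (rule sa_add[OF saA f1f2 sa_scaleC[OF saA g'v]])
  have G: "(x, f2 + scaleC lam v) \<in> op_comp (op_comp A A) B"
    unfolding op_comp_def using xgx A1 A2 by blast
  obtain gd where dgd: "(d, gd) \<in> B" and f2gd: "f2 = gd - scaleC mu d"
    using f2d resolvent_mem by blast
  have vB: "(v, scaleC p gd) \<in> B" unfolding v_def by (rule sa_scaleC[OF saB dgd])
  have H: "(x, scaleC p gd) \<in> op_comp B (op_comp A A)"
    unfolding op_comp_def using xg' g'v vB by blast
  have "scaleC (q ^ 2) (scaleC p gd) = gd" using qp by (simp add: scaleC_scaleC scaleC_one)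
  also have "gd = f2 + scaleC mu d" using f2gd by simp
  also have "scaleC mu d = scaleC lam v"
    using qp by (simp add: lam_def v_def scaleC_scaleC mult.assoc)
  finally have E: "f2 + scaleC lam v = scaleC (q ^ 2) (scaleC p gd)" by simp
  show ?thesis unfolding Dp_def using G H E by blast
qed

theorem mainTheorem6:
  fixes q mu :: complex
    and A B :: "('a::{complex_inner, complete_space}) op"
  assumes "cmod q = 1" and "q ^ 2 \<noteq> 1"
    and "self_adjoint A" and "self_adjoint B"
    and "mu \<in> resolvent_set B" and "mu * q \<in> resolvent_set B"
    and "mu * q ^ 2 \<in> resolvent_set B"
    and "op_comp (resolvent B mu) A \<subseteq> op_smult q (op_comp A (resolvent B (mu * q)))"
    and "op_comp (resolvent B (mu * q)) A \<subseteq> op_smult q (op_comp A (resolvent B (mu * q ^ 2)))"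
  shows "is_core (Dp (q ^ 2) (op_comp A A) B) B"
proof -
  note q1 = assms(1) and saA = assms(3) and saB = assms(4) and r3 = assms(7)
  define D where "D = Dp (q ^ 2) (op_comp A A) B"
  define lam where "lam = mu * q ^ 2"
  define S where "S = {(f, g). (f, g) \<in> B \<and> f \<in> D}"
  have sub: "D \<subseteq> Domain B" unfolding D_def Dp_def op_comp_def by blast
  have clB: "closed B" by (rule sa_closed[OF saB])
  have c1: "closure S \<subseteq> B"
  proof -
    have "closure S \<subseteq> closure B" by (rule closure_mono) (auto simp: S_def)
    thus ?thesis using closure_closed[OF clB] by simp
  qed
  obtain K where K: "\<forall>(a, b) \<in> resolvent B lam. norm b \<le> K * norm a"
    using r3 unfolding resolvent_set_def lam_def by blast
  define K' where "K' = \<bar>K\<bar> + 1"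
  have K'0: "0 < K'" by (simp add: K'_def)
  have Kb: "\<And>a b. (a, b) \<in> resolvent B lam \<Longrightarrow> norm b \<le> K' * norm a"
  proof -
    fix a b assume "(a, b) \<in> resolvent B lam"
    hence "norm b \<le> K * norm a" using K by blast
    also have "\<dots> \<le> K' * norm a" by (intro mult_right_mono) (auto simp: K'_def)
    finally show "norm b \<le> K' * norm a" .
  qed
  define C where "C = 1 + K' * (1 + cmod lam)"
  have C0: "0 < C" using K'0 by (simp add: C_def add_pos_nonneg)
  have c2: "B \<subseteq> closure S"
  proof
    fix xy assume "xy \<in> B"
    then obtain x y where xyB: "(x, y) \<in> B" and xy: "xy = (x, y)" by (cases xy) auto
    define h where "h = y - scaleC lam x"
    show "xy \<in> closure S" unfolding xy closure_approachable
    proof (intro allI impI)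
      fix eps :: real assume eps: "0 < eps"
      define del where "del = eps / (2 * C)"
      have del0: "0 < del" using eps C0 by (simp add: del_def)
      obtain f where fD: "f \<in> Domain (A O A)" and fh: "dist f h < del"
        using sa_dense2[OF saA del0] by blast
      obtain x' where fx': "(f, x') \<in> resolvent B lam" using rs_ex[OF r3[folded lam_def]] by blast
      have x'D: "x' \<in> D" unfolding D_def
        by (rule keyD[OF assms(1) saA saB assms(5,6,7,8,9) fD fx'[unfolded lam_def]])
      obtain g1 where x'g1: "(x', g1) \<in> B" and fg1: "f = g1 - scaleC lam x'"
        using fx' resolvent_mem by blast
      have inS: "(x', g1) \<in> S" using x'g1 x'D by (simp add: S_def)
      have "(x' - x, g1 - y) \<in> B" by (rule sa_diff[OF saB x'g1 xyB])
      moreover have "f - h = (g1 - y) - scaleC lam (x' - x)"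
        using fg1 by (simp add: h_def scaleC_diff_right algebra_simps)
      ultimately have "(f - h, x' - x) \<in> resolvent B lam" using resolvent_mem by blast
      hence nx: "norm (x' - x) \<le> K' * norm (f - h)" by (rule Kb)
      have "g1 - y = (f - h) + scaleC lam (x' - x)"
        using fg1 by (simp add: h_def scaleC_diff_right algebra_simps)
      hence ng: "norm (g1 - y) \<le> norm (f - h) + cmod lam * norm (x' - x)"
        using norm_triangle_ineq[of "f - h" "scaleC lam (x' - x)"] by (simp add: norm_scaleC)
      have "cmod lam * norm (x' - x) \<le> cmod lam * (K' * norm (f - h))"
        using nx by (simp add: mult_left_mono)
      hence tot: "norm (x' - x) + norm (g1 - y) \<le> C * norm (f - h)"
        using nx ng by (simp add: C_def algebra_simps)
      have "dist (x', g1) (x, y) \<le> dist x' x + dist g1 y"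
        unfolding dist_Pair_Pair by (rule sqrt_sum_squares_le_sum) simp_all
      also have "\<dots> \<le> C * norm (f - h)" using tot by (simp add: dist_norm)
      also have "\<dots> < C * del" using fh C0 by (simp add: dist_norm)
      also have "C * del = eps / 2" using C0 by (simp add: del_def)
      also have "\<dots> < eps" using eps by simp
      finally show "\<exists>p\<in>S. dist p (x, y) < eps" using inS by blast
    qed
  qed
  show ?thesis unfolding is_core_def D_def[symmetric] S_def[symmetric]
    using sub c1 c2 by blast
qed

end
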